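(* Let $R$ be a commutative ring with unit, $Q=(V,E,X,s,t,l)$ a labelled quiver, and let $f,g\in R\langle X\rangle$ be compatible with $Q$ such that $s(f)\cap t(g)\neq\emptyset$. Then $fg$ is compatible with $Q$ and \[\sigma(fg)\supseteq\{(u,w)\in s(g)\times t(f) \mid \exists v\in s(f)\cap t(g): (u,v)\in\sigma(g)\wedge (v,w)\in\sigma(f)\}.\] If in addition $f$ and $g$ are uniformly compatible with $Q$ and $fg\neq 0$, then equality holds and $fg$ is uniformly compatible as well.
   Context: $R\langle X\rangle$ is the free algebra of noncommutative polynomials over $R$ in indeterminates $X$, with monomials the words in $\langle X\rangle$ (including the empty word $1$); $\operatorname{supp}(f)$ is the set of monomials with nonzero coefficient. A labelled quiver $Q=(V,E,X,s,t,l)$ has vertices $V$, edges $E$, source/target maps $s,t:E\to V$ and labelling $l:E\to X$. A nonempty path $p=e_n\cdots e_1$ (with $s(e_{i+1})=t(e_i)$) has label $l(e_n)\cdots l(e_1)$, source $s(e_1)$, target $t(e_n)$; each vertex $v$ has an empty path with label $1$ and source and target $v$. For a monomial $m$, $\sigma(m)=\{(s(p),t(p)) : p \text{ a path with } l(p)=m\}$; for a polynomial $f$, $\sigma(f)=\bigcap_{m\in\operatorname{supp}(f)}\sigma(m)$. The sets of sources and targets of $f$ are $s(f)=\{v\in V\mid \exists w: (v,w)\in\sigma(f)\}$ and $t(f)=\{w\in V\mid\exists v:(v,w)\in\sigma(f)\}$. $f$ is compatible with $Q$ if $\sigma(f)\neq\emptyset$, and uniformly compatible if it is compatible and all $m\in\operatorname{supp}(f)$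 have the same set $\sigma(m)$. *)

theory Defs
  imports Main
begin

text \<open>Noncommutative polynomials over a commutative ring 'r in indeterminates 'x are
  represented as coefficient functions on words (monomials) 'x list with finite support.
  The word [x1,...,xn] stands for the monomial x1 x2 ... xn; [] is the empty word 1.\<close>

definition ncpoly :: "('x list \<Rightarrow> 'r::zero) \<Rightarrow> bool" where
  "ncpoly f \<longleftrightarrow> finite {m. f m \<noteq> 0}"

definition supp :: "('x list \<Rightarrow> 'r::zero) \<Rightarrow> 'x list set" where
  "supp f = {m. f m \<noteq> 0}"

definition ncmult :: "('x list \<Rightarrow> 'r::comm_ring_1) \<Rightarrow> ('x list \<Rightarrow> 'r) \<Rightarrow> 'x list \<Rightarrow> 'r" where
  "ncmult f g w = (\<Sum>i\<le>length w. f (take i w) * g (drop i w))"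

text \<open>Labelled quiver (V,E,X,s,t,l): vertex set V, edge set E, source/target maps into V,
  labelling into the alphabet 'x (the set X of indeterminates).\<close>
definition quiver :: "'v set \<Rightarrow> 'e set \<Rightarrow> ('e \<Rightarrow> 'v) \<Rightarrow> ('e \<Rightarrow> 'v) \<Rightarrow> bool" where
  "quiver V E s t \<longleftrightarrow> (\<forall>e\<in>E. s e \<in> V \<and> t e \<in> V)"

text \<open>A path p = e_n ... e_1 is written as the list [e_n, ..., e_1] with s(e_{i+1}) = t(e_i);
  its source is s(e_1), its target t(e_n), its label the word [l e_n, ..., l e_1].\<close>
fun path_from_to :: "'v set \<Rightarrow> 'e set \<Rightarrow> ('e \<Rightarrow> 'v) \<Rightarrow> ('e \<Rightarrow> 'v) \<Rightarrow> 'e list \<Rightarrow> 'v \<Rightarrow> 'v \<Rightarrow> bool" where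
  "path_from_to V E s t [] u w \<longleftrightarrow> u \<in> V \<and> u = w"
| "path_from_to V E s t (e # p) u w \<longleftrightarrow> e \<in> E \<and> t e = w \<and>
     (if p = [] then s e = u else path_from_to V E s t p u (s e))"

definition sigma_mono :: "'v set \<Rightarrow> 'e set \<Rightarrow> ('e \<Rightarrow> 'v) \<Rightarrow> ('e \<Rightarrow> 'v) \<Rightarrow> ('e \<Rightarrow> 'x)
    \<Rightarrow> 'x list \<Rightarrow> ('v \<times> 'v) set" where
  "sigma_mono V E s t l m = {(u, w). \<exists>p. path_from_to V E s t p u w \<and> map l p = m}"

text \<open>sigma(f): intersection over the support (restricted to V x V, which is the value of
  the empty intersection).\<close>
definition sigma :: "'v set \<Rightarrow> 'e set \<Rightarrow> ('e \<Rightarrow> 'v) \<Rightarrow> ('e \<Rightarrow> 'v) \<Rightarrow> ('e \<Rightarrow> 'x)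
    \<Rightarrow> ('x list \<Rightarrow> 'r::zero) \<Rightarrow> ('v \<times> 'v) set" where
  "sigma V E s t l f = {(u, w) \<in> V \<times> V. \<forall>m\<in>supp f. (u, w) \<in> sigma_mono V E s t l m}"

definition sources :: "'v set \<Rightarrow> 'e set \<Rightarrow> ('e \<Rightarrow> 'v) \<Rightarrow> ('e \<Rightarrow> 'v) \<Rightarrow> ('e \<Rightarrow> 'x)
    \<Rightarrow> ('x list \<Rightarrow> 'r::zero) \<Rightarrow> 'v set" where
  "sources V E s t l f = {v \<in> V. \<exists>w. (v, w) \<in> sigma V E s t l f}"

definition targets :: "'v set \<Rightarrow> 'e set \<Rightarrow> ('e \<Rightarrow> 'v) \<Rightarrow> ('e \<Rightarrow> 'v) \<Rightarrow> ('e \<Rightarrow> 'x)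
    \<Rightarrow> ('x list \<Rightarrow> 'r::zero) \<Rightarrow> 'v set" where
  "targets V E s t l f = {w \<in> V. \<exists>v. (v, w) \<in> sigma V E s t l f}"

definition compatible :: "'v set \<Rightarrow> 'e set \<Rightarrow> ('e \<Rightarrow> 'v) \<Rightarrow> ('e \<Rightarrow> 'v) \<Rightarrow> ('e \<Rightarrow> 'x)
    \<Rightarrow> ('x list \<Rightarrow> 'r::zero) \<Rightarrow> bool" where
  "compatible V E s t l f \<longleftrightarrow> sigma V E s t l f \<noteq> {}"

definition uniformly_compatible :: "'v set \<Rightarrow> 'e set \<Rightarrow> ('e \<Rightarrow> 'v) \<Rightarrow> ('e \<Rightarrow> 'v) \<Rightarrow> ('e \<Rightarrow> 'x)
    \<Rightarrow> ('x list \<Rightarrow> 'r::zero) \<Rightarrow> bool" where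
  "uniformly_compatible V E s t l f \<longleftrightarrow> compatible V E s t l f \<and>
     (\<forall>m\<in>supp f. \<forall>m'\<in>supp f. sigma_mono V E s t l m = sigma_mono V E s t l m')"

end

theory Submission
  imports Defs
begin

lemma path_V:
  assumes Q: "quiver V E s t"
  shows "path_from_to V E s t p u w \<Longrightarrow> u \<in> V \<and> w \<in> V"
proof (induction p arbitrary: w)
  case Nil then show ?case by auto
next
  case (Cons e p)
  have eE: "e \<in> E" "t e = w" using Cons.prems by auto
  have V: "s e \<in> V" "t e \<in> V" using Q eE(1) unfolding quiver_def by auto
  show ?case
  proof (cases "p = []")
    case True
    then have "s e = u" using Cons.prems by simp
    then show ?thesis using V eE by simp
  next
    case False
    then have "path_from_to V E s t p u (s e)" using Cons.prems by simp
    then show ?thesis using Cons.IH V eE by blast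
  qed
qed

lemma path_app:
  "path_from_to V E s t p1 b c \<Longrightarrow> path_from_to V E s t p2 a b \<Longrightarrow>
   path_from_to V E s t (p1 @ p2) a c"
proof (induction p1 arbitrary: c)
  case Nil then show ?case by simp
next
  case (Cons e p1)
  show ?case
  proof (cases "p1 = []")
    case True
    have pe: "e \<in> E" "t e = c" "s e = b" using Cons.prems(1) True by auto
    show ?thesis
    proof (cases "p2 = []")
      case True
      then have "a = b" using Cons.prems(2) by simp
      then show ?thesis using pe True \<open>p1 = []\<close> by simp
    next
      case False
      then show ?thesis using pe Cons.prems(2) \<open>p1 = []\<close> by simp
    qed
  next
    case False
    have pe: "e \<in> E" "t e = c" "path_from_to V E s t p1 b (s e)"
      using Cons.prems(1) False by auto
    have "path_from_to V E s t (p1 @ p2) a (s e)" using Cons.IH[OF pe(3) Cons.prems(2)] .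
    then show ?thesis using pe False by simp
  qed
qed

lemma path_split:
  assumes Q: "quiver V E s t"
  shows "path_from_to V E s t (p1 @ p2) a c \<Longrightarrow>
   \<exists>b. path_from_to V E s t p1 b c \<and> path_from_to V E s t p2 a b"
proof (induction p1 arbitrary: c)
  case Nil
  then have "c \<in> V" using path_V[OF Q] by simp
  then show ?case using Nil by simp
next
  case (Cons e p1)
  have eE: "e \<in> E" "t e = c" using Cons.prems by auto
  show ?case
  proof (cases "p1 @ p2 = []")
    case True
    then have "s e = a" using Cons.prems by auto
    moreover have "s e \<in> V" using Q eE unfolding quiver_def by auto
    ultimately show ?thesis using True eE by auto
  next
    case False
    then have P: "path_from_to V E s t (p1 @ p2) a (s e)" using Cons.prems by auto
    show ?thesis
    proof (cases "p1 = []")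
      case True
      then show ?thesis using P eE by auto
    next
      case False
      then obtain b where "path_from_to V E s t p1 b (s e)" "path_from_to V E s t p2 a b"
        using Cons.IH[OF P] by auto
      then show ?thesis using False eE by (intro exI[of _ b]) auto
    qed
  qed
qed

lemma supp_mult:
  assumes "m \<in> supp (ncmult f g)"
  shows "\<exists>i. take i m \<in> supp f \<and> drop i m \<in> supp g"
proof (rule ccontr)
  assume "\<not> ?thesis"
  then have 0: "f (take i m) = 0 \<or> g (drop i m) = 0" for i unfolding supp_def
    by auto
  have "\<forall>i. f (take i m) * g (drop i m) = 0"
  proof
    fix i show "f (take i m) * g (drop i m) = 0" using 0[of i] by auto
  qed
  then have "ncmult f g m = 0" unfolding ncmult_def by simp
  then show False using assms unfolding supp_def by simp
qed

lemma sigma_mono_app: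
  assumes "(a, b) \<in> sigma_mono V E s t l v" "(b, c) \<in> sigma_mono V E s t l u"
  shows "(a, c) \<in> sigma_mono V E s t l (u @ v)"
proof -
  obtain p2 where p2: "path_from_to V E s t p2 a b" "map l p2 = v"
    using assms(1) unfolding sigma_mono_def by auto
  obtain p1 where p1: "path_from_to V E s t p1 b c" "map l p1 = u"
    using assms(2) unfolding sigma_mono_def by auto
  have "path_from_to V E s t (p1 @ p2) a c" using path_app[OF p1(1) p2(1)] .
  moreover have "map l (p1 @ p2) = u @ v" using p1 p2 by simp
  ultimately show ?thesis unfolding sigma_mono_def by blast
qed

lemma sigma_mono_split:
  assumes Q: "quiver V E s t" and "(a, c) \<in> sigma_mono V E s t l (u @ v)"
  shows "\<exists>b. (a, b) \<in> sigma_mono V E s t l v \<and> (b, c) \<in> sigma_mono V E s t l u"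
proof -
  obtain p where p: "path_from_to V E s t p a c" "map l p = u @ v"
    using assms(2) unfolding sigma_mono_def by auto
  obtain p1 p2 where pp: "p = p1 @ p2" "map l p1 = u" "map l p2 = v"
    using p(2) by (metis map_eq_append_conv)
  obtain b where b: "path_from_to V E s t p1 b c" "path_from_to V E s t p2 a b"
    using path_split[OF Q, of p1 p2 a c] p(1) pp(1) by blast
  have "(a, b) \<in> sigma_mono V E s t l v" unfolding sigma_mono_def using b(2) pp(3) by blast
  moreover have "(b, c) \<in> sigma_mono V E s t l u" unfolding sigma_mono_def using b(1) pp(2) by blast
  ultimately show ?thesis by blast
qed

lemma sigma_mono_V:
  assumes Q: "quiver V E s t" and "(a, c) \<in> sigma_mono V E s t l m"
  shows "a \<in> V \<and> c \<in> V"
  using assms path_V[OF Q] unfolding sigma_mono_def by auto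

theorem lemma3p7:
  fixes V :: "'v set" and E :: "'e set" and s t :: "'e \<Rightarrow> 'v" and l :: "'e \<Rightarrow> 'x"
    and f g :: "'x list \<Rightarrow> 'r::comm_ring_1"
  assumes Q: "quiver V E s t"
    and pf: "ncpoly f" and pg: "ncpoly g"
    and cf: "compatible V E s t l f" and cg: "compatible V E s t l g"
    and st: "sources V E s t l f \<inter> targets V E s t l g \<noteq> {}"
  shows "compatible V E s t l (ncmult f g) \<and>
    {(u, w) \<in> sources V E s t l g \<times> targets V E s t l f.
       \<exists>v \<in> sources V E s t l f \<inter> targets V E s t l g.
         (u, v) \<in> sigma V E s t l g \<and> (v, w) \<in> sigma V E s t l f}
      \<subseteq> sigma V E s t l (ncmult f g) \<and>
    (uniformly_compatible V E s t l f \<and> uniformly_compatible V E s t l g \<and>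
     ncmult f g \<noteq> (\<lambda>_. 0) \<longrightarrow>
       sigma V E s t l (ncmult f g) =
         {(u, w) \<in> sources V E s t l g \<times> targets V E s t l f.
           \<exists>v \<in> sources V E s t l f \<inter> targets V E s t l g.
             (u, v) \<in> sigma V E s t l g \<and> (v, w) \<in> sigma V E s t l f}
       \<and> uniformly_compatible V E s t l (ncmult f g))"
proof -
  let ?S = "{(u, w) \<in> sources V E s t l g \<times> targets V E s t l f.
       \<exists>v \<in> sources V E s t l f \<inter> targets V E s t l g.
         (u, v) \<in> sigma V E s t l g \<and> (v, w) \<in> sigma V E s t l f}"
  have sub: "?S \<subseteq> sigma V E s t l (ncmult f g)"
  proof
    fix x assume "x \<in> ?S"
    then obtain a c b where x: "x = (a, c)" and ab: "(a, b) \<in> sigma V E s t l g"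
      and bc: "(b, c) \<in> sigma V E s t l f" by blast
    have "a \<in> V" "c \<in> V" using ab bc unfolding sigma_def by auto
    moreover have "(a, c) \<in> sigma_mono V E s t l m" if mm: "m \<in> supp (ncmult f g)" for m
    proof -
      obtain i where i: "take i m \<in> supp f" "drop i m \<in> supp g"
        using supp_mult[OF mm] by blast
      have "(a, b) \<in> sigma_mono V E s t l (drop i m)" using ab i unfolding sigma_def by auto
      moreover have "(b, c) \<in> sigma_mono V E s t l (take i m)" using bc i unfolding sigma_def by auto
      ultimately show ?thesis using sigma_mono_app[of a b _ _ _ _ _ "drop i m" c "take i m"] by simp
    qed
    ultimately show "x \<in> sigma V E s t l (ncmult f g)" unfolding x sigma_def by auto
  qed
  have ne: "?S \<noteq> {}"
  proof -
    obtain b where b: "b \<in> sources V E s t l f" "b \<in> targets V E s t l g" using st by blast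
    then obtain a c where "(a, b) \<in> sigma V E s t l g" "(b, c) \<in> sigma V E s t l f"
      unfolding sources_def targets_def by blast
    moreover then have "a \<in> sources V E s t l g" "c \<in> targets V E s t l f"
      unfolding sources_def targets_def sigma_def by auto
    ultimately have "(a, c) \<in> ?S" using b by blast
    then show ?thesis by blast
  qed
  have comp: "compatible V E s t l (ncmult f g)"
    using sub ne unfolding compatible_def by blast
  have third: "sigma V E s t l (ncmult f g) = ?S \<and> uniformly_compatible V E s t l (ncmult f g)"
    if uf: "uniformly_compatible V E s t l f" and ug: "uniformly_compatible V E s t l g"
      and nz: "ncmult f g \<noteq> (\<lambda>_. 0)"
  proof -
    have key: "sigma_mono V E s t l m \<subseteq> ?S" if m: "m \<in> supp (ncmult f g)" for m
    proof (rule subsetI)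
      fix x assume xm: "x \<in> sigma_mono V E s t l m"
      obtain i where i: "take i m \<in> supp f" "drop i m \<in> supp g"
        using supp_mult[OF m] by blast
      obtain a c where x: "x = (a, c)" by (cases x)
      have "(a, c) \<in> sigma_mono V E s t l (take i m @ drop i m)" using xm x by simp
      then obtain b where ab: "(a, b) \<in> sigma_mono V E s t l (drop i m)"
        and bc: "(b, c) \<in> sigma_mono V E s t l (take i m)"
        using sigma_mono_split[OF Q] by blast
      have abV: "a \<in> V" "b \<in> V" using sigma_mono_V[OF Q ab] by auto
      have cV: "c \<in> V" using sigma_mono_V[OF Q bc] by auto
      have ug': "\<forall>m'\<in>supp g. sigma_mono V E s t l (drop i m) = sigma_mono V E s t l m'"
        using ug i(2) unfolding uniformly_compatible_def by blast
      have uf': "\<forall>m'\<in>supp f. sigma_mono V E s t l (take i m) = sigma_mono V E s t l m'"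
        using uf i(1) unfolding uniformly_compatible_def by blast
      have "\<forall>m'\<in>supp g. (a, b) \<in> sigma_mono V E s t l m'" using ug' ab by metis
      then have sg: "(a, b) \<in> sigma V E s t l g"
        using abV unfolding sigma_def by blast
      have "\<forall>m'\<in>supp f. (b, c) \<in> sigma_mono V E s t l m'" using uf' bc by metis
      then have sf: "(b, c) \<in> sigma V E s t l f"
        using abV cV unfolding sigma_def by blast
      have "a \<in> sources V E s t l g" "b \<in> targets V E s t l g"
        "b \<in> sources V E s t l f" "c \<in> targets V E s t l f"
        using sg sf abV cV unfolding sources_def targets_def by auto
      then show "x \<in> ?S" using x sg sf by blast
    qed
    have sm: "sigma V E s t l (ncmult f g) \<subseteq> sigma_mono V E s t l m"
      if "m \<in> supp (ncmult f g)" for m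
      using that unfolding sigma_def by auto
    have eq: "sigma_mono V E s t l m = ?S" if "m \<in> supp (ncmult f g)" for m
      using key[OF that] sm[OF that] sub by blast
    obtain m0 where m0: "m0 \<in> supp (ncmult f g)" using nz unfolding supp_def by auto
    have "sigma V E s t l (ncmult f g) = ?S"
      using sm[OF m0] eq[OF m0] sub by blast
    moreover have "uniformly_compatible V E s t l (ncmult f g)"
      using comp eq unfolding uniformly_compatible_def by auto
    ultimately show ?thesis by blast
  qed
  show ?thesis using comp sub third by blast
qed

end
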